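(* Let $I$ be a finite tree and let $\Sigma_{i_1}\Sigma_{i_2}\cdots\Sigma_{i_p}$ be a reduced expression for a morphism of $R_0(I)$ from an arbitrary orientation of $I$ to $\Gamma_0$ or $\Gamma_0^{\mathrm{op}}$. Then for every letter $i$ occurring in the word $i_1\cdots i_p$, exactly one of the following holds: (i) no $j$ adjacent to $i$ occurs to the left of the leftmost occurrence of $i$; (ii) every $j$ adjacent to $i$ occurs exactly once to the left of the leftmost occurrence of $i$.
   Context: Let $I$ be a finite tree. $\mathrm{Quiv}(I)$ is the set of orientations of $I$; $\Gamma_0$ is an alternating orientation (every vertex a source or sink) and $\Gamma_0^{\mathrm{op}}$ its opposite. For $\Gamma\in\mathrm{Quiv}(I)$ and a source or sink $i$ of $\Gamma$, $s_i\Gamma$ is the orientation obtained by reversing all arrows at $i$. The groupoid $R_0(I)$ has object set $\mathrm{Quiv}(I)$ and is generated by elementary isomorphisms $\Sigma_i:\Gamma\to s_i\Gamma$ (for each $\Gamma$ and each source or sink $i$ of $\Gamma$) subject to the relations, whenever both sides are defined: (R1) $\Sigma_i^2=1$; (R2) $\Sigma_i\Sigma_j=\Sigma_j\Sigma_i$ when $i,j$ are not adjacent. Composition is right-to-left, so in $\Sigma_{i_1}\cdots\Sigma_{i_p}$ the rightmost factor $\Sigma_{i_p}$ is applied first and the leftmost factor $\Sigma_{i_1}$ last. An expression for a morphism $\Sigma$ is a composable word equal to $\Sigma$; $\ell(\Sigma)$ is the minimal length of an expression, and an expression of length $\ell(\Sigma)$ is called reduced. *)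

theory Defs
  imports Main
begin

definition is_cycle :: "('a \<Rightarrow> 'a \<Rightarrow> bool) \<Rightarrow> 'a list \<Rightarrow> bool" where
  "is_cycle E c \<longleftrightarrow> length c \<ge> 3 \<and> distinct c
     \<and> (\<forall>k. Suc k < length c \<longrightarrow> E (c ! k) (c ! Suc k))
     \<and> E (last c) (hd c)"

definition is_tree :: "'a set \<Rightarrow> ('a \<Rightarrow> 'a \<Rightarrow> bool) \<Rightarrow> bool" where
  "is_tree V E \<longleftrightarrow> finite V \<and> V \<noteq> {}
     \<and> (\<forall>x y. E x y \<longrightarrow> x \<in> V \<and> y \<in> V)
     \<and> (\<forall>x y. E x y \<longrightarrow> E y x) \<and> (\<forall>x. \<not> E x x)
     \<and> (\<forall>x\<in>V. \<forall>y\<in>V. E\<^sup>*\<^sup>* x y)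
     \<and> (\<nexists>c. is_cycle E c)"

text \<open>An orientation: Q a b means an arrow a \<rightarrow> b; each edge carries exactly one arrow.\<close>

definition orientation :: "'a set \<Rightarrow> ('a \<Rightarrow> 'a \<Rightarrow> bool) \<Rightarrow> ('a \<Rightarrow> 'a \<Rightarrow> bool) \<Rightarrow> bool" where
  "orientation V E Q \<longleftrightarrow> (\<forall>a b. Q a b \<longrightarrow> E a b) \<and> (\<forall>a b. E a b \<longrightarrow> (Q a b \<noteq> Q b a))"

definition is_source :: "('a \<Rightarrow> 'a \<Rightarrow> bool) \<Rightarrow> 'a \<Rightarrow> bool" where
  "is_source Q i \<longleftrightarrow> (\<forall>j. \<not> Q j i)"

definition is_sink :: "('a \<Rightarrow> 'a \<Rightarrow> bool) \<Rightarrow> 'a \<Rightarrow> bool" where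
  "is_sink Q i \<longleftrightarrow> (\<forall>j. \<not> Q i j)"

definition srcsink :: "'a set \<Rightarrow> ('a \<Rightarrow> 'a \<Rightarrow> bool) \<Rightarrow> 'a \<Rightarrow> bool" where
  "srcsink V Q i \<longleftrightarrow> i \<in> V \<and> (is_source Q i \<or> is_sink Q i)"

definition alternating :: "'a set \<Rightarrow> ('a \<Rightarrow> 'a \<Rightarrow> bool) \<Rightarrow> bool" where
  "alternating V Q \<longleftrightarrow> (\<forall>i\<in>V. is_source Q i \<or> is_sink Q i)"

definition opp :: "('a \<Rightarrow> 'a \<Rightarrow> bool) \<Rightarrow> ('a \<Rightarrow> 'a \<Rightarrow> bool)" where
  "opp Q = (\<lambda>a b. Q b a)"

definition refl_at :: "'a \<Rightarrow> ('a \<Rightarrow> 'a \<Rightarrow> bool) \<Rightarrow> ('a \<Rightarrow> 'a \<Rightarrow> bool)" where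
  "refl_at i Q = (\<lambda>a b. if a = i \<or> b = i then Q b a else Q a b)"

text \<open>Words are written as in the paper: [i1,...,ip] stands for
Sigma_i1 ... Sigma_ip, so the LAST list element is applied first.
applied_ok checks a list in order of application.\<close>

fun applied_ok :: "'a set \<Rightarrow> ('a \<Rightarrow> 'a \<Rightarrow> bool) \<Rightarrow> 'a list \<Rightarrow> bool" where
  "applied_ok V Q [] = True"
| "applied_ok V Q (i # is) = (srcsink V Q i \<and> applied_ok V (refl_at i Q) is)"

definition composable :: "'a set \<Rightarrow> ('a \<Rightarrow> 'a \<Rightarrow> bool) \<Rightarrow> 'a list \<Rightarrow> bool" where
  "composable V Q w \<longleftrightarrow> applied_ok V Q (rev w)"

definition target :: "('a \<Rightarrow> 'a \<Rightarrow> bool) \<Rightarrow> 'a list \<Rightarrow> ('a \<Rightarrow> 'a \<Rightarrow> bool)" where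
  "target Q w = fold refl_at (rev w) Q"

inductive R0_step :: "'a set \<Rightarrow> ('a \<Rightarrow> 'a \<Rightarrow> bool) \<Rightarrow> ('a \<Rightarrow> 'a \<Rightarrow> bool)
    \<Rightarrow> 'a list \<Rightarrow> 'a list \<Rightarrow> bool" for V E Q where
  R1: "composable V Q (u @ [i, i] @ v) \<Longrightarrow> composable V Q (u @ v)
       \<Longrightarrow> R0_step V E Q (u @ [i, i] @ v) (u @ v)"
| R2: "\<not> E i j \<Longrightarrow> composable V Q (u @ [i, j] @ v) \<Longrightarrow> composable V Q (u @ [j, i] @ v)
       \<Longrightarrow> R0_step V E Q (u @ [i, j] @ v) (u @ [j, i] @ v)"

definition R0_equiv :: "'a set \<Rightarrow> ('a \<Rightarrow> 'a \<Rightarrow> bool) \<Rightarrow> ('a \<Rightarrow> 'a \<Rightarrow> bool)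
    \<Rightarrow> 'a list \<Rightarrow> 'a list \<Rightarrow> bool" where
  "R0_equiv V E Q = equivclp (R0_step V E Q)"

definition reduced :: "'a set \<Rightarrow> ('a \<Rightarrow> 'a \<Rightarrow> bool) \<Rightarrow> ('a \<Rightarrow> 'a \<Rightarrow> bool) \<Rightarrow> 'a list \<Rightarrow> bool" where
  "reduced V E Q w \<longleftrightarrow> composable V Q w
     \<and> (\<forall>w'. composable V Q w' \<and> R0_equiv V E Q w w' \<longrightarrow> length w \<le> length w')"

end

theory Submission
  imports Defs
begin

lemma eq_step: "R0_step V E Q a b \<Longrightarrow> R0_equiv V E Q a b"
  unfolding R0_equiv_def equivclp_def by (rule r_into_rtranclp, rule symclpI1)

lemma eq_trans: "R0_equiv V E Q a b \<Longrightarrow> R0_equiv V E Q b c \<Longrightarrow> R0_equiv V E Q a c"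
  unfolding R0_equiv_def equivclp_def by (rule rtranclp_trans)

lemma applied_ok_append:
  "applied_ok V Q (p @ s) = (applied_ok V Q p \<and> applied_ok V (fold refl_at p Q) s)"
  by (induction p arbitrary: Q) auto

lemma applied_ok_set: "applied_ok V Q s \<Longrightarrow> set s \<subseteq> V"
  by (induction s arbitrary: Q) (auto simp: srcsink_def)

lemma orient_refl:
  "orientation V E Q \<Longrightarrow> \<forall>a b. E a b \<longrightarrow> E b a \<Longrightarrow> orientation V E (refl_at i Q)"
proof -
  assume o: "orientation V E Q" and s: "\<forall>a b. E a b \<longrightarrow> E b a"
  have q1: "\<And>a b. Q a b \<Longrightarrow> E a b" "\<And>a b. E a b \<Longrightarrow> Q a b \<noteq> Q b a"
    using o unfolding orientation_def by blast+
  show ?thesis unfolding orientation_def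
  proof (intro conjI allI impI)
    fix a b assume h: "refl_at i Q a b"
    show "E a b"
    proof (cases "a = i \<or> b = i")
      case True
      then have "Q b a" using h by (simp add: refl_at_def)
      then have "E b a" by (rule q1(1))
      then show ?thesis using s by blast
    next
      case False
      then have "Q a b" using h by (simp add: refl_at_def)
      then show ?thesis by (rule q1(1))
    qed
  next
    fix a b assume h: "E a b"
    have "E b a" using s h by blast
    show "refl_at i Q a b \<noteq> refl_at i Q b a"
      using q1(2)[OF h] unfolding refl_at_def by auto
  qed
qed

lemma orient_fold:
  "orientation V E Q \<Longrightarrow> \<forall>a b. E a b \<longrightarrow> E b a \<Longrightarrow> orientation V E (fold refl_at s Q)"
  by (induction s arbitrary: Q) (auto simp: orient_refl)

lemma fold_unchanged: "a \<notin> set s \<Longrightarrow> b \<notin> set s \<Longrightarrow> fold refl_at s Q a b = Q a b"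
  by (induction s arbitrary: Q) (auto simp: refl_at_def)

lemma refl_refl: "refl_at v (refl_at v Q) = Q"
  by (auto simp: refl_at_def fun_eq_iff)

lemma refl_comm: "refl_at v (refl_at z Q) = refl_at z (refl_at v Q)"
  by (auto simp: refl_at_def fun_eq_iff)

lemma mixed:
  assumes "orientation V E Q" "E i x" "E i y"
    "i \<notin> set s1" "x \<notin> set s1" "y \<notin> set s1"
    "i \<notin> set s2" "x \<notin> set s2" "y \<notin> set s2" "i \<noteq> y" "x \<noteq> y"
    "is_source Q i \<or> is_sink Q i"
  shows "\<not> (is_source (fold refl_at (s1 @ [y] @ s2) (refl_at i Q)) i
          \<or> is_sink (fold refl_at (s1 @ [y] @ s2) (refl_at i Q)) i)"
proof -
  define T where "T = fold refl_at (s1 @ [y] @ s2) (refl_at i Q)"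
  have T: "T = fold refl_at s2 (refl_at y (fold refl_at s1 (refl_at i Q)))"
    by (simp add: T_def)
  have ix: "i \<noteq> x" using assms(1,2) unfolding orientation_def by auto
  have 1: "T i x = Q x i" "T x i = Q i x" "T i y = Q i y" "T y i = Q y i"
    unfolding T using assms ix by (auto simp: fold_unchanged refl_at_def)
  have 2: "Q i x \<noteq> Q x i" "Q i y \<noteq> Q y i" using assms(1,2,3) unfolding orientation_def by auto
  show ?thesis unfolding T_def[symmetric]
  proof
    assume h: "is_source T i \<or> is_sink T i"
    from assms(12) show False
    proof
      assume "is_source Q i"
      then have "\<not> Q x i" "\<not> Q y i" by (simp_all add: is_source_def)
      then have "T x i" "T i y" using 1 2 by simp_all
      then show False using h unfolding is_source_def is_sink_def by blast
    next
      assume "is_sink Q i"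
      then have "\<not> Q i x" "\<not> Q i y" by (simp_all add: is_sink_def)
      then have "T i x" "T y i" using 1 2 by simp_all
      then show False using h unfolding is_source_def is_sink_def by blast
    qed
  qed
qed

lemma srcsink_nonadj:
  "orientation V E Q \<Longrightarrow> \<not> E v z \<Longrightarrow> \<not> E z v \<Longrightarrow> v \<noteq> z
   \<Longrightarrow> srcsink V (refl_at v Q) z = srcsink V Q z"
proof -
  assume o: "orientation V E Q" and n: "\<not> E v z" "\<not> E z v" "v \<noteq> z"
  have q: "\<not> Q v z" "\<not> Q z v" using o n unfolding orientation_def by auto
  have "is_source (refl_at v Q) z = is_source Q z" "is_sink (refl_at v Q) z = is_sink Q z"
    unfolding is_source_def is_sink_def refl_at_def using q n(3) by auto
  then show ?thesis unfolding srcsink_def by simp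
qed

lemma swap_ok:
  assumes "orientation V E G" "\<forall>a b. E a b \<longrightarrow> E b a"
    "applied_ok V G (p @ [v,z] @ r)" "\<not> E v z" "v \<noteq> z"
  shows "applied_ok V G (p @ [z,v] @ r)"
proof -
  define Q where "Q = fold refl_at p G"
  have oQ: "orientation V E Q" unfolding Q_def using assms orient_fold by blast
  have nzv: "\<not> E z v" using assms by blast
  have a: "applied_ok V G p" "srcsink V Q v" "srcsink V (refl_at v Q) z"
     "applied_ok V (refl_at z (refl_at v Q)) r"
    using assms(3) unfolding applied_ok_append Q_def by auto
  have "srcsink V Q z" using a srcsink_nonadj[OF oQ assms(4) nzv assms(5)] by simp
  moreover have "srcsink V (refl_at z Q) v" using a srcsink_nonadj[OF oQ nzv assms(4)] assms(5) by simp
  ultimately show ?thesis using a refl_comm[of z v Q] unfolding applied_ok_append Q_def by auto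
qed

lemma cancel:
  assumes "orientation V E G" "\<forall>a b. E a b \<longrightarrow> E b a"
    "applied_ok V G (p @ [v] @ m @ [v] @ q)" "\<forall>y\<in>set m. y \<noteq> v \<and> \<not> E v y"
  shows "applied_ok V G (p @ m @ q) \<and> R0_equiv V E G (rev (p @ [v] @ m @ [v] @ q)) (rev (p @ m @ q))"
  using assms(3,4)
proof (induction m arbitrary: p)
  case Nil
  have ok: "applied_ok V G (p @ q)"
  proof -
    have a: "applied_ok V G ((p @ [v,v]) @ q)" using Nil(1) by simp
    have f: "fold refl_at (p @ [v,v]) G = fold refl_at p G" by (simp add: refl_refl)
    show ?thesis using a unfolding applied_ok_append f by simp
  qed
  have "R0_step V E G (rev q @ [v, v] @ rev p) (rev q @ rev p)"
    by (rule R1) (use Nil(1) ok in \<open>auto simp: composable_def\<close>)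
  then show ?case using ok eq_step by simp
next
  case (Cons z m)
  have zv0: "z \<noteq> v" "\<not> E v z" using Cons(3) by simp_all
  have zv: "z \<noteq> v" "\<not> E v z" "\<not> E z v" using zv0 assms(2) by blast+
  have ok: "applied_ok V G (p @ [z,v] @ (m @ [v] @ q))"
    by (rule swap_ok[OF assms(1,2)]) (use Cons(2) zv in auto)
  have IH: "applied_ok V G ((p @ [z]) @ m @ q) \<and>
     R0_equiv V E G (rev ((p @ [z]) @ [v] @ m @ [v] @ q)) (rev ((p @ [z]) @ m @ q))"
    by (rule Cons(1)) (use ok Cons(3) in auto)
  have "R0_step V E G (rev (m @ [v] @ q) @ [z, v] @ rev p) (rev (m @ [v] @ q) @ [v, z] @ rev p)"
    by (rule R2) (use zv Cons(2) ok in \<open>auto simp: composable_def\<close>)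
  then have st0: "R0_equiv V E G (rev (m @ [v] @ q) @ [z, v] @ rev p) (rev (m @ [v] @ q) @ [v, z] @ rev p)"
    by (rule eq_step)
  have e1: "rev (p @ [v] @ (z # m) @ [v] @ q) = rev (m @ [v] @ q) @ [z, v] @ rev p" by simp
  have e2: "rev ((p @ [z]) @ [v] @ m @ [v] @ q) = rev (m @ [v] @ q) @ [v, z] @ rev p" by simp
  have st: "R0_equiv V E G (rev (p @ [v] @ (z # m) @ [v] @ q)) (rev ((p @ [z]) @ [v] @ m @ [v] @ q))"
    unfolding e1 e2 by (rule st0)
  have e3: "(p @ [z]) @ m @ q = p @ (z # m) @ q" by simp
  show ?case using IH eq_trans[OF st] unfolding e3 by blast
qed

lemma key:
  assumes "orientation V E G" and sym_fact: "\<forall>a b. E a b \<longrightarrow> E b a"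
  shows "applied_ok V G (p @ [v] @ m @ [v] @ q) \<Longrightarrow> v \<notin> set m \<Longrightarrow> E v x \<Longrightarrow> x \<notin> set m
   \<Longrightarrow> \<exists>ws'. applied_ok V G ws' \<and> R0_equiv V E G (rev (p @ [v] @ m @ [v] @ q)) (rev ws')
          \<and> length ws' < length (p @ [v] @ m @ [v] @ q)"
proof (induction "length m" arbitrary: p m q v x rule: less_induct)
  case less
  show ?case
  proof (cases "\<forall>y\<in>set m. \<not> E v y")
    case True
    have ny: "\<forall>y\<in>set m. y \<noteq> v \<and> \<not> E v y" using True less(3) by blast
    have c: "applied_ok V G (p @ m @ q) \<and> R0_equiv V E G (rev (p @ [v] @ m @ [v] @ q)) (rev (p @ m @ q))"
      by (rule cancel[OF assms less(2) ny])
    have l: "length (p @ m @ q) < length (p @ [v] @ m @ [v] @ q)" by simp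
    show ?thesis using c l by blast
  next
    case False
    then obtain y where y: "y \<in> set m" "E v y" by blast
    obtain m1 m2 where m: "m = m1 @ y # m2" "y \<notin> set m1"
      using split_list_first[OF y(1)] by blast
    show ?thesis
    proof (cases "y \<in> set m2")
      case True
      obtain m3 m4 where m2: "m2 = m3 @ y # m4" "y \<notin> set m3"
        using split_list_first[OF True] by blast
      have eq: "p @ [v] @ m @ [v] @ q = (p @ [v] @ m1) @ [y] @ m3 @ [y] @ (m4 @ [v] @ q)"
        using m m2 by simp
      have h1: "length m3 < length m" using m m2 by simp
      have h2: "applied_ok V G ((p @ [v] @ m1) @ [y] @ m3 @ [y] @ (m4 @ [v] @ q))"
        using less(2) unfolding eq .
      have h4: "E y v" using sym_fact y(2) by blast
      have h5: "v \<notin> set m3" using less(3) m m2 by simp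
      note less(1)[OF h1 h2 m2(2) h4 h5]
      then show ?thesis unfolding eq .
    next
      case False
      define Q where "Q = fold refl_at p G"
      have oQ: "orientation V E Q" unfolding Q_def by (rule orient_fold[OF assms])
      have a0: "applied_ok V Q ([v] @ m @ [v] @ q)" using less(2) unfolding applied_ok_append Q_def by blast
      have a1: "applied_ok V (fold refl_at m (refl_at v Q)) ([v] @ q)"
        using a0 unfolding applied_ok_append by simp
      have a: "srcsink V Q v" "srcsink V (fold refl_at (m1 @ [y] @ m2) (refl_at v Q)) v"
        using a0 a1 m by simp_all
      have "\<not> (is_source (fold refl_at (m1 @ [y] @ m2) (refl_at v Q)) v
          \<or> is_sink (fold refl_at (m1 @ [y] @ m2) (refl_at v Q)) v)"
      proof (rule mixed[OF oQ less(4) y(2)])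
        show "v \<notin> set m1" "x \<notin> set m1" "v \<notin> set m2" "x \<notin> set m2"
          using less(3,5) m by simp_all
        show "y \<notin> set m1" by (rule m(2))
        show "y \<notin> set m2" by (rule False)
        show "v \<noteq> y" using less(3) y(1) by blast
        show "x \<noteq> y" using less(5) y(1) by blast
        show "is_source Q v \<or> is_sink Q v" using a(1) unfolding srcsink_def by blast
      qed
      then show ?thesis using a(2) by (simp add: srcsink_def)
    qed
  qed
qed


theorem mainTheorem17:
  fixes V :: "'a set" and E G G0 :: "'a \<Rightarrow> 'a \<Rightarrow> bool" and w :: "'a list" and i :: 'a
  assumes "is_tree V E" and "card V \<ge> 2"
    and "orientation V E G0" and "alternating V G0"
    and "orientation V E G"
    and "reduced V E G w"
    and "target G w = G0 \<or> target G w = opp G0"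
    and "i \<in> set w"
  shows "(\<forall>j. E i j \<longrightarrow> j \<notin> set (takeWhile (\<lambda>k. k \<noteq> i) w))
     \<noteq> (\<forall>j. E i j \<longrightarrow> count_list (takeWhile (\<lambda>k. k \<noteq> i) w) j = 1)"
proof -
  have tr: "finite V" "\<forall>a b. E a b \<longrightarrow> E b a" "\<forall>x\<in>V. \<forall>y\<in>V. E\<^sup>*\<^sup>* x y"
    using assms(1) unfolding is_tree_def by - (elim conjE, assumption)+
  have sym: "\<forall>a b. E a b \<longrightarrow> E b a" by (rule tr(2))
  obtain u r where w: "w = u @ i # r" "i \<notin> set u" using assms(8) split_list_first by metis
  have tw: "takeWhile (\<lambda>k. k \<noteq> i) w = u" using w by (simp add: takeWhile_append)
  have red: "composable V G w" "\<And>w'. composable V G w' \<Longrightarrow> R0_equiv V E G w w' \<Longrightarrow> length w \<le> length w'"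
    using assms(6) unfolding reduced_def by auto
  have ok: "applied_ok V G (rev r @ [i] @ rev u)" using red(1) w unfolding composable_def by simp
  have iV: "i \<in> V" using applied_ok_set[OF ok] by auto
  have "\<exists>j. E i j"
  proof -
    have fin: "finite V" by (rule tr(1))
    have "\<exists>j\<in>V. j \<noteq> i"
    proof (rule ccontr)
      assume "\<not> ?thesis"
      then have "V \<subseteq> {i}" by auto
      then have "card V \<le> card {i}" using card_mono[of "{i}" V] by simp
      then have "card V \<le> 1" by simp
      then show False using assms(2) by simp
    qed
    then obtain j where j: "j \<in> V" "j \<noteq> i" by blast
    have "E\<^sup>*\<^sup>* i j" using tr(3) iV j by blast
    then show ?thesis using j(2) by (cases rule: converse_rtranclpE) auto
  qed
  then obtain j1 where j1: "E i j1" by blast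
  have once: "count_list u j = 1" if j: "E i j" "j \<in> set u" for j
  proof -
    obtain u1 t where u: "u = u1 @ j # t" "j \<notin> set u1" using j(2) split_list_first by metis
    have "j \<notin> set t"
    proof
      assume "j \<in> set t"
      then obtain u2 u3 where t: "t = u2 @ j # u3" "j \<notin> set u2" using split_list_first by metis
      have eq: "rev r @ [i] @ rev u = (rev r @ [i] @ rev u3) @ [j] @ rev u2 @ [j] @ rev u1"
        using u t by simp
      have ok2: "applied_ok V G ((rev r @ [i] @ rev u3) @ [j] @ rev u2 @ [j] @ rev u1)"
        using ok unfolding eq .
      have c1: "j \<notin> set (rev u2)" using t by simp
      have c2: "E j i" using sym j by blast
      have c3: "i \<notin> set (rev u2)" using w(2) u t by simp
      obtain ws' where ws0: "applied_ok V G ws'" "R0_equiv V E G (rev ((rev r @ [i] @ rev u3) @ [j] @ rev u2 @ [j] @ rev u1)) (rev ws')"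
          "length ws' < length ((rev r @ [i] @ rev u3) @ [j] @ rev u2 @ [j] @ rev u1)"
        using key[OF assms(5) sym ok2 c1 c2 c3] by blast
      have ew: "rev ((rev r @ [i] @ rev u3) @ [j] @ rev u2 @ [j] @ rev u1) = w"
        unfolding eq[symmetric] using w by simp
      have ws': "applied_ok V G ws'" "R0_equiv V E G w (rev ws')" "length ws' < length w"
      proof -
        show "applied_ok V G ws'" by (rule ws0(1))
        show "R0_equiv V E G w (rev ws')" using ws0(2) unfolding ew .
        have "length w = length ((rev r @ [i] @ rev u3) @ [j] @ rev u2 @ [j] @ rev u1)"
          using arg_cong[OF ew, of length] by simp
        then show "length ws' < length w" using ws0(3) by simp
      qed
      have "length w \<le> length (rev ws')" by (rule red(2)) (use ws' in \<open>auto simp: composable_def\<close>)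
      then show False using ws'(3) by simp
    qed
    then show ?thesis using u by simp
  qed
  show ?thesis
  proof (cases "\<forall>j. E i j \<longrightarrow> j \<notin> set u")
    case True
    then have "\<not> (\<forall>j. E i j \<longrightarrow> count_list u j = 1)" using j1 by auto
    then show ?thesis using True tw by simp
  next
    case False
    then obtain j0 where j0: "E i j0" "j0 \<in> set u" by blast
    have "E i j \<longrightarrow> count_list u j = 1" for j
    proof
      assume ij: "E i j"
      show "count_list u j = 1"
      proof (cases "j \<in> set u")
        case True then show ?thesis using once ij by blast
      next
        case jn: False
        obtain a b where u: "u = a @ j0 # b" "j0 \<notin> set a" using j0(2) split_list_first by metis
        have "count_list u j0 = 1" using once j0 by blast
        then have b: "j0 \<notin> set b" using u by (simp add: count_list_0_iff)
        define Q where "Q = fold refl_at (rev r) G"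
        have oQ: "orientation V E Q" unfolding Q_def using assms(5) sym orient_fold by blast
        have sQ: "srcsink V Q i" using ok unfolding applied_ok_append Q_def by simp
        have T: "target G w = fold refl_at (rev b @ [j0] @ rev a) (refl_at i Q)"
          unfolding target_def Q_def using w u by simp
        have nT: "\<not> (is_source (target G w) i \<or> is_sink (target G w) i)"
          unfolding T by (rule mixed[OF oQ ij j0(1)]) (use w u b jn sQ in \<open>auto simp: srcsink_def\<close>)
        have "is_source G0 i \<or> is_sink G0 i" using assms(4) iV unfolding alternating_def by blast
        moreover have "is_source (opp G0) i = is_sink G0 i" "is_sink (opp G0) i = is_source G0 i"
          unfolding is_source_def is_sink_def opp_def by simp_all
        ultimately have "is_source (target G w) i \<or> is_sink (target G w) i"
          using assms(7) by (cases "target G w = G0") auto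
        then show ?thesis using nT by blast
      qed
    qed
    then show ?thesis using False tw j1 by auto
  qed
qed

end
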